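(* Fix an integer $q \geq 3$ and a real $r \in [0,1]$. Then the function $F(t) = \left(c_q^{t}\, c_{q-1}^{1-t}\right)^{1/(q+t-r)}$ is decreasing on $t \in [0,1]$.
   Context: For integers $q \geq 1$, $c_q := \sqrt{\lfloor (q+2)^2/4 \rfloor}$. *)

theory Defs
  imports "HOL-Analysis.Analysis"
begin

definition cq :: "nat \<Rightarrow> real" where
  "cq q = sqrt (real ((q + 2)^2 div 4))"

end

theory Submission
  imports Defs
begin

lemma key_real:
  fixes n :: nat assumes "n \<ge> 3"
  shows "(1 + 1 / real n) ^ (2*n - 1) \<le> real n ^ 2"
proof -
  have "(1 + 1 / real n) ^ (2*n - 1) \<le> (1 + 1 / real n) ^ (2*n)"
    by (rule power_increasing) auto
  also have "\<dots> \<le> exp (1 / real n) ^ (2*n)"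
    by (rule power_mono) (auto simp: exp_ge_add_one_self add.commute)
  also have "\<dots> = exp (real (2*n) * (1 / real n))"
    by (rule exp_of_nat_mult[symmetric])
  also have "\<dots> = exp 2" using assms by simp
  also have "\<dots> = exp 1 ^ 2" using exp_of_nat_mult[of 2 "1::real"] by simp
  also have "\<dots> \<le> 3 ^ 2" by (rule power_mono) (auto simp: exp_le)
  also have "\<dots> \<le> real n ^ 2" using assms by (intro power_mono) auto
  finally show ?thesis .
qed

lemma key_nat:
  fixes n :: nat assumes "n \<ge> 2"
  shows "(n+1) ^ (2*n - 1) \<le> n ^ (2*n + 1)"
proof (cases "n = 2")
  case True then show ?thesis by simp
next
  case False
  hence n3: "n \<ge> 3" using assms by auto
  have eq: "real (n+1) = real n * (1 + 1 / real n)" using n3 by (simp add: field_simps)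
  have "real (n+1) ^ (2*n - 1) = (real n * (1 + 1 / real n)) ^ (2*n - 1)"
    by (simp only: eq)
  also have "\<dots> = real n ^ (2*n - 1) * (1 + 1 / real n) ^ (2*n - 1)"
    by (rule power_mult_distrib)
  also have "\<dots> \<le> real n ^ (2*n - 1) * real n ^ 2"
    using key_real[OF n3] by (intro mult_left_mono) auto
  also have "\<dots> = real n ^ (2*n+1)" using n3
    by (simp add: power_add[symmetric])
  finally have "real ((n+1) ^ (2*n - 1)) \<le> real (n ^ (2*n + 1))" by simp
  thus ?thesis by linarith
qed

lemma key_cq:
  fixes q :: nat assumes "q \<ge> 3"
  shows "((q+2)^2 div 4) ^ q \<le> ((q+1)^2 div 4) ^ (q+1)"
    and "(q+1)^2 div 4 \<le> (q+2)^2 div 4" and "(q+1)^2 div 4 > 0"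
proof -
  show "(q+1)^2 div 4 \<le> (q+2)^2 div 4" by (intro div_le_mono power_mono) auto
  have "(q+1)^2 \<ge> (4::nat)^2" using assms by (intro power_mono) auto
  thus "(q+1)^2 div 4 > 0" by simp
  show "((q+2)^2 div 4) ^ q \<le> ((q+1)^2 div 4) ^ (q+1)"
  proof (cases "even q")
    case True
    then obtain m where q: "q = 2*m" by auto
    with assms have m: "m \<ge> 2" by auto
    have e1: "(q+2)^2 div 4 = (m+1)^2" unfolding q by (simp add: power2_eq_square algebra_simps)
    have "(q+1)^2 = 4*(m*(m+1)) + 1" unfolding q by (simp add: power2_eq_square algebra_simps)
    hence e2: "(q+1)^2 div 4 = m*(m+1)" by simp
    have "(m+1)^(2*m-1) * (m+1)^(2*m+1) \<le> m^(2*m+1) * (m+1)^(2*m+1)"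
      using key_nat[OF m] by (intro mult_right_mono) auto
    moreover have "(m+1)^(2*m-1) * (m+1)^(2*m+1) = ((m+1)^2)^q"
    proof -
      have "(m+1)^(2*m-1) * (m+1)^(2*m+1) = (m+1)^((2*m-1)+(2*m+1))" by (simp only: power_add)
      also have "(2*m-1)+(2*m+1) = 2*q" unfolding q using m by simp
      finally show ?thesis by (simp only: power_mult)
    qed
    moreover have "m^(2*m+1) * (m+1)^(2*m+1) = (m*(m+1))^(q+1)"
      unfolding q by (simp only: power_mult_distrib)
    ultimately show ?thesis unfolding e1 e2 by metis
  next
    case False
    then obtain m where q: "q = 2*m+1" using oddE by blast
    with assms have m: "m+1 \<ge> 2" by auto
    have "(q+2)^2 = 4*((m+1)*(m+2)) + 1" unfolding q by (simp add: power2_eq_square algebra_simps)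
    hence e1: "(q+2)^2 div 4 = (m+1)*(m+2)" by simp
    have e2: "(q+1)^2 div 4 = (m+1)^2" unfolding q by (simp add: power2_eq_square algebra_simps)
    have "(m+2)^(2*(m+1)-1) * (m+1)^(2*m+1) \<le> (m+1)^(2*(m+1)+1) * (m+1)^(2*m+1)"
      using key_nat[OF m] by (intro mult_right_mono) (auto simp: add.assoc)
    moreover have "(m+2)^(2*(m+1)-1) * (m+1)^(2*m+1) = ((m+1)*(m+2))^q"
    proof -
      have "2*(m+1)-1 = q" unfolding q by simp
      hence "(m+2)^(2*(m+1)-1) * (m+1)^(2*m+1) = (m+2)^q * (m+1)^q" unfolding q by simp
      thus ?thesis by (simp only: power_mult_distrib mult.commute)
    qed
    moreover have "(m+1)^(2*(m+1)+1) * (m+1)^(2*m+1) = ((m+1)^2)^(q+1)"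
    proof -
      have "(m+1)^(2*(m+1)+1) * (m+1)^(2*m+1) = (m+1)^((2*(m+1)+1)+(2*m+1))" by (simp only: power_add)
      also have "(2*(m+1)+1)+(2*m+1) = 2*(q+1)" unfolding q by simp
      finally show ?thesis by (simp only: power_mult)
    qed
    ultimately show ?thesis unfolding e1 e2 by metis
  qed
qed

theorem corollary2p13:
  fixes q :: nat and r :: real
  assumes "q \<ge> 3" and "0 \<le> r" and "r \<le> 1"
  shows "antimono_on {0..1}
           (\<lambda>t::real. (cq q powr t * cq (q - 1) powr (1 - t)) powr (1 / (real q + t - r)))"
proof -
  define A where "A = (q+2)^2 div 4"
  define B where "B = (q+1)^2 div 4"
  have q1: "q - 1 + 2 = q + 1" using assms by auto
  have cA: "cq q = sqrt (real A)" unfolding cq_def A_def by simp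
  have cB: "cq (q-1) = sqrt (real B)" unfolding cq_def B_def q1 by simp
  note k = key_cq[OF assms(1), folded A_def B_def]
  have Bp: "B > 0" "A > 0" using k by auto
  define a where "a = ln (cq q)"
  define b where "b = ln (cq (q-1))"
  have a2: "a = ln (real A) / 2" unfolding a_def cA using Bp by (simp add: ln_sqrt)
  have b2: "b = ln (real B) / 2" unfolding b_def cB using Bp by (simp add: ln_sqrt)
  have lnB: "ln (real B ^ n) = real n * ln (real B)" for n using Bp by (simp add: ln_realpow)
  have "real (A ^ q) \<le> real (B ^ (q+1))" using k(1) by linarith
  hence "ln (real A ^ q) \<le> ln (real B ^ (q+1))" using Bp by (simp del: power_Suc)
  moreover have "ln (real A ^ q) = real q * ln (real A)" using Bp by (simp add: ln_realpow)
  moreover have "ln (real B ^ (q+1)) = real (q+1) * ln (real B)" using lnB by blast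
  ultimately have "real q * ln (real A) \<le> (real q + 1) * ln (real B)" by (simp add: add.commute)
  hence qab: "real q * a \<le> (real q + 1) * b" unfolding a2 b2 by simp
  have "ln (real B) \<le> ln (real A)" using k(2) Bp by simp
  hence ab: "b \<le> a" unfolding a2 b2 by simp
  have b0: "b \<ge> 0" unfolding b2 using Bp by simp
  define s where "s = real q - r"
  have s2: "s \<ge> 2" "s \<le> real q" using assms unfolding s_def by auto
  have ds: "(a - b) * s \<le> b"
  proof -
    have "(a - b) * s \<le> (a - b) * real q" using ab s2 by (intro mult_left_mono) auto
    thus ?thesis using qab by (simp add: algebra_simps)
  qed
  have F: "(cq q powr t * cq (q - 1) powr (1 - t)) powr (1 / (real q + t - r))
        = exp ((b + t * (a - b)) / (s + t))" for t
  proof -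
    have pos: "cq q > 0" "cq (q-1) > 0" unfolding cA cB using Bp by auto
    have "cq q powr t * cq (q - 1) powr (1 - t) = exp (t * a + (1 - t) * b)"
      using pos unfolding a_def b_def powr_def by (simp add: exp_add)
    thus ?thesis unfolding powr_def s_def by (simp add: algebra_simps diff_divide_distrib add_divide_distrib)
  qed
  show ?thesis
  proof (rule monotone_onI)
    fix t u :: real assume t: "t \<in> {0..1}" and u: "u \<in> {0..1}" and tu: "t \<le> u"
    have pt: "s + t > 0" "s + u > 0" using t u s2 by auto
    have "(b + u * (a - b)) * (s + t) \<le> (b + t * (a - b)) * (s + u)"
    proof -
      have "(b + t * (a - b)) * (s + u) - (b + u * (a - b)) * (s + t) = (u - t) * (b - (a - b) * s)"
        by (simp add: algebra_simps)
      also have "\<dots> \<ge> 0" using tu ds by auto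
      finally show ?thesis by simp
    qed
    hence "(b + u * (a - b)) / (s + u) \<le> (b + t * (a - b)) / (s + t)"
      using pt by (simp add: divide_simps)
    thus "(cq q powr u * cq (q - 1) powr (1 - u)) powr (1 / (real q + u - r))
        \<le> (cq q powr t * cq (q - 1) powr (1 - t)) powr (1 / (real q + t - r))"
      unfolding F by simp
  qed
qed

end
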